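(* Let $n, d, p, q$ be positive integers. Let $\tilde{A} \in \mathbb{R}^{n \times n}$ be a normalized adjacency matrix of a graph on $n$ nodes, let $P \in \mathbb{R}^{n \times n}$, $X \in \mathbb{R}^{n \times p}$, $W_x \in \mathbb{R}^{p \times d}$ be arbitrary matrices, and let $W_z \in \mathbb{R}^{d \times d}$ satisfy $\|W_z\|_F^2 < 1/n$, where $\|\cdot\|_F$ is the Frobenius norm. Let $\sigma$ be either the row-wise Softmax or the element-wise Sigmoid function, and define the one-hop convolutional map $f : \mathbb{R}^{n \times d} \to \mathbb{R}^{n \times d}$ by $$f(Z) = \sigma(\tilde{A} Z W_z + P X W_x).$$ Then the implicit GNN with backbone $f$ is well-posed: the equation $Z = f(Z)$ has a unique solution $Z^* \in \mathbb{R}^{n\times d}$, and for every starting point $Z_0 \in \mathbb{R}^{n \times d}$ the iteration $Z_{k+1} = f(Z_k)$ converges to $Z^*$.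
   Context: An implicit graph neural network (IGNN) with backbone $f$ outputs node representations $Z$ defined as a solution of the equilibrium equation $Z = f(Z)$; it is called well-posed if this equation has an existing and unique solution to which forward iteration $Z_{k+1} = f(Z_k)$ converges from an arbitrary start point. The normalized adjacency matrix is $\tilde{A} = D^{-1/2}(A + I)D^{-1/2}$, where $A$ is the (symmetric, 0-1) adjacency matrix of the graph, $I$ is the identity, and $D$ is the diagonal degree matrix of $A + I$; in particular all entries of $\tilde A$ lie in $[0,1]$. The special case $P = \tilde{A}$ is a one-layer GCN backbone and $P = I$ is the IGNN* backbone. *)

theory Defs
  imports "HOL-Analysis.Analysis"
begin

text \<open>Matrices are Cartesian-product types: an n x m real matrix is real^'m^'n,
  rows indexed by 'n, columns by 'm. Matrix product is **.\<close>

definition is_adjacency :: "real^'n^'n \<Rightarrow> bool" where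
  "is_adjacency A \<longleftrightarrow> (\<forall>i j. A$i$j = A$j$i) \<and> (\<forall>i j. A$i$j = 0 \<or> A$i$j = 1)"

definition degree_mat :: "real^'n^'n \<Rightarrow> real^'n^'n" where
  "degree_mat A = (\<chi> i j. if i = j then (\<Sum>k\<in>UNIV. (A + mat 1)$i$k) else 0)"

definition inv_sqrt_diag :: "real^'n^'n \<Rightarrow> real^'n^'n" where
  "inv_sqrt_diag D = (\<chi> i j. if i = j then 1 / sqrt (D$i$i) else 0)"

definition norm_adj :: "real^'n^'n \<Rightarrow> real^'n^'n" where
  "norm_adj A = inv_sqrt_diag (degree_mat A) ** (A + mat 1) ** inv_sqrt_diag (degree_mat A)"

definition frob_norm :: "real^'m^'n \<Rightarrow> real" where
  "frob_norm M = sqrt (\<Sum>i\<in>UNIV. \<Sum>j\<in>UNIV. (M$i$j)^2)"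

definition row_softmax :: "real^'m^'n \<Rightarrow> real^'m^'n" where
  "row_softmax M = (\<chi> i j. exp (M$i$j) / (\<Sum>k\<in>UNIV. exp (M$i$k)))"

definition sigmoid_mat :: "real^'m^'n \<Rightarrow> real^'m^'n" where
  "sigmoid_mat M = (\<chi> i j. 1 / (1 + exp (- (M$i$j))))"

definition well_posed :: "('a::topological_space \<Rightarrow> 'a) \<Rightarrow> bool" where
  "well_posed f \<longleftrightarrow> (\<exists>!Z. Z = f Z) \<and>
     (\<forall>Z0. (\<lambda>k. (f ^^ k) Z0) \<longlonglongrightarrow> (THE Z. Z = f Z))"

end

theory Submission
  imports Defs
begin


lemma norm_sq_mat: "(norm (M::real^'m^'n))^2 = (\<Sum>i\<in>UNIV. \<Sum>j\<in>UNIV. (M$i$j)^2)"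
  unfolding power2_norm_eq_inner by (simp add: inner_vec_def power2_eq_square)

lemma norm_sq_vec: "(norm (v::real^'m))^2 = (\<Sum>j\<in>UNIV. (v$j)^2)"
  unfolding power2_norm_eq_inner by (simp add: inner_vec_def power2_eq_square)

lemma frob_eq: "frob_norm (M::real^'m^'n) = norm M"
  unfolding frob_norm_def norm_sq_mat[symmetric] by simp

lemma norm_mult_le: "norm ((A::real^'m^'n) ** (B::real^'k^'m)) \<le> norm A * norm B"
proof -
  have e: "(A ** B)$i$j = A$i \<bullet> column j B" for i j
    by (simp add: matrix_matrix_mult_def inner_vec_def column_def)
  have cs: "((A ** B)$i$j)^2 \<le> (norm (A$i))^2 * (norm (column j B))^2" for i j
    unfolding e by (metis Cauchy_Schwarz_ineq power2_norm_eq_inner)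
  have "(norm (A ** B))^2 \<le> (\<Sum>i\<in>UNIV. \<Sum>j\<in>UNIV. (norm (A$i))^2 * (norm (column j B))^2)"
    unfolding norm_sq_mat by (intro sum_mono cs)
  also have "\<dots> = (\<Sum>i\<in>UNIV. (norm (A$i))^2) * (\<Sum>j\<in>UNIV. (norm (column j B))^2)"
    by (simp add: sum_product)
  also have "(\<Sum>i\<in>UNIV. (norm (A$i))^2) = (norm A)^2"
    by (simp add: power2_norm_eq_inner inner_vec_def)
  also have "(\<Sum>j\<in>UNIV. (norm (column j B))^2) = (norm B)^2"
    unfolding norm_sq_mat norm_sq_vec column_def by (simp, rule sum.swap)
  finally have "(norm (A ** B))^2 \<le> (norm A * norm B)^2" by (simp add: power_mult_distrib)
  then show ?thesis by (meson norm_ge_zero power2_le_imp_le mult_nonneg_nonneg)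
qed

lemma norm_adj_entry:
  "norm_adj A $ i $ j = (A + mat 1)$i$j / (sqrt (\<Sum>k\<in>UNIV. (A + mat 1)$i$k) * sqrt (\<Sum>k\<in>UNIV. (A + mat 1)$j$k))"
  unfolding norm_adj_def inv_sqrt_diag_def degree_mat_def matrix_matrix_mult_def
  by (simp add: if_distrib[of "\<lambda>x. x * y" for y] if_distrib[of "\<lambda>x. y * x" for y] if_distrib[of "\<lambda>x. x / y" for y] sum.delta sum.delta' cong: if_cong)

lemma norm_adj_bound:
  assumes adj: "is_adjacency (A::real^'n^'n)"
  shows "(norm (norm_adj A))^2 \<le> real CARD('n)"
proof -
  define B where "B = A + mat 1"
  define d where "d i = (\<Sum>k\<in>UNIV. B$i$k)" for i
  have Bij: "B$i$j = A$i$j + (if i = j then 1 else 0)" for i j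
    by (simp add: B_def mat_def)
  have a01: "A$i$j = 0 \<or> A$i$j = 1" and asym: "A$i$j = A$j$i" for i j
    using adj unfolding is_adjacency_def by auto
  have Bnn: "0 \<le> B$i$j" for i j
    unfolding Bij using a01[of i j] by auto
  have Bsym: "B$i$j = B$j$i" for i j
    unfolding Bij using asym[of i j] by auto
  have Bii: "1 \<le> B$i$i" for i
    unfolding Bij using a01[of i i] by auto
  have dge: "B$i$j \<le> d i" for i j
    unfolding d_def by (rule member_le_sum) (auto simp: Bnn)
  have dpos: "0 < d i" for i
    using Bii[of i] dge[of i i] by linarith
  have Bjd: "B$i$j \<le> d j" for i j
    using Bsym dge by metis
  have entry: "norm_adj A $i$j = B$i$j / (sqrt (d i) * sqrt (d j))" for i j
    unfolding norm_adj_entry B_def d_def ..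
  have sq: "(norm_adj A $i$j)^2 \<le> B$i$j / d i" for i j
  proof -
    have "(norm_adj A $i$j)^2 = (B$i$j)^2 / (d i * d j)"
      unfolding entry using dpos[of i] dpos[of j]
      by (simp add: power_divide power_mult_distrib)
    also have "\<dots> \<le> B$i$j / d i"
    proof -
      have "(B$i$j)^2 \<le> B$i$j * d j"
        unfolding power2_eq_square by (rule mult_left_mono[OF Bjd Bnn])
      then show ?thesis using dpos[of i] dpos[of j]
        by (simp add: divide_simps)
    qed
    finally show ?thesis .
  qed
  have "(norm (norm_adj A))^2 \<le> (\<Sum>i\<in>(UNIV::'n set). \<Sum>j\<in>UNIV. B$i$j / d i)"
    unfolding norm_sq_mat by (intro sum_mono sq)
  also have "\<dots> = (\<Sum>i\<in>(UNIV::'n set). 1)"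
    using dpos by (intro sum.cong refl) (simp add: sum_divide_distrib[symmetric] d_def[symmetric] less_imp_neq[symmetric])
  finally show ?thesis by simp
qed



lemma lip1_deriv:
  fixes f f' :: "real \<Rightarrow> real"
  assumes d: "\<And>x. DERIV f x :> f' x" and b: "\<And>x. \<bar>f' x\<bar> \<le> 1"
  shows "\<bar>f a - f b\<bar> \<le> \<bar>a - b\<bar>"
proof -
  have *: "\<bar>f q - f p\<bar> \<le> \<bar>q - p\<bar>" if "p < q" for p q
  proof -
    have "\<exists>z. p < z \<and> z < q \<and> f q - f p = (q - p) * f' z" by (rule MVT2[OF that]) (rule d)
    then obtain z where "f q - f p = (q - p) * f' z" by blast
    then have "\<bar>f q - f p\<bar> = \<bar>q - p\<bar> * \<bar>f' z\<bar>" by (simp add: abs_mult)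
    also have "\<dots> \<le> \<bar>q - p\<bar> * 1" by (rule mult_left_mono[OF b]) simp
    finally show ?thesis by simp
  qed
  show ?thesis
    using *[of a b] *[of b a] by (cases a b rule: linorder_cases) (auto simp: abs_minus_commute)
qed

lemma sigmoid_lip: "\<bar>1 / (1 + exp (- a)) - 1 / (1 + exp (- b))\<bar> \<le> \<bar>a - b :: real\<bar>"
proof (rule lip1_deriv)
  fix x :: real
  show "DERIV (\<lambda>x. 1 / (1 + exp (- x))) x :> exp (-x) / ((1 + exp (-x)) * (1 + exp (-x)))"
    by (auto intro!: derivative_eq_intros simp: add_pos_pos)
      (metis add_pos_pos exp_gt_zero less_irrefl zero_less_one)
  have p: "0 < exp (-x)" by simp
  have "exp (-x) \<le> (1 + exp (-x)) * (1 + exp (-x))" using p by (simp add: algebra_simps)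
  then show "\<bar>exp (-x) / ((1 + exp (-x)) * (1 + exp (-x)))\<bar> \<le> 1"
    using p by (simp add: divide_simps)
qed

lemma sigmoid_mat_lip: "norm (sigmoid_mat M - sigmoid_mat N) \<le> norm (M - N)"
  by (intro norm_le_componentwise_cart) (simp add: sigmoid_mat_def sigmoid_lip)



lemma sm_deriv_bound:
  fixes u h :: "real^'d" and e :: "'d \<Rightarrow> real"
  assumes epos: "\<And>j. 0 < e j"
  shows "\<bar>((\<Sum>j\<in>UNIV. u$j * (e j * h$j)) * (\<Sum>j\<in>UNIV. e j)
           - (\<Sum>j\<in>UNIV. u$j * e j) * (\<Sum>k\<in>UNIV. e k * h$k))
          / ((\<Sum>j\<in>UNIV. e j) * (\<Sum>j\<in>UNIV. e j))\<bar> \<le> norm u * norm h"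
proof -
  define S where "S = (\<Sum>j\<in>UNIV. e j)"
  have Spos: "0 < S" unfolding S_def by (rule sum_pos) (auto simp: epos)
  define s where "s j = e j / S" for j
  define m where "m = (\<Sum>k\<in>UNIV. s k * h$k)"
  define v where "v = (\<chi> j. s j * (h$j - m))"
  have s_nn: "0 \<le> s j" for j unfolding s_def using epos[of j] Spos by simp
  have s_le: "s j \<le> 1" for j
  proof -
    have "e j \<le> S" unfolding S_def by (rule member_le_sum) (auto simp: less_imp_le epos)
    then show ?thesis unfolding s_def using Spos by simp
  qed
  have sum_s: "(\<Sum>j\<in>UNIV. s j) = 1"
    unfolding s_def using Spos by (simp add: sum_divide_distrib[symmetric] S_def[symmetric])
  have eq: "((\<Sum>j\<in>UNIV. u$j * (e j * h$j)) * S - (\<Sum>j\<in>UNIV. u$j * e j) * (\<Sum>k\<in>UNIV. e k * h$k))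
          / (S * S) = u \<bullet> v"
  proof -
    have 1: "(\<Sum>j\<in>UNIV. u$j * (e j * h$j)) / S = (\<Sum>j\<in>UNIV. u$j * s j * h$j)"
      unfolding s_def by (simp add: sum_divide_distrib mult.assoc)
    have 2: "(\<Sum>j\<in>UNIV. u$j * e j) / S = (\<Sum>j\<in>UNIV. u$j * s j)"
      unfolding s_def by (simp add: sum_divide_distrib)
    have 3: "(\<Sum>k\<in>UNIV. e k * h$k) / S = m"
      unfolding s_def m_def by (simp add: sum_divide_distrib)
    have "u \<bullet> v = (\<Sum>j\<in>UNIV. u$j * s j * h$j) - (\<Sum>j\<in>UNIV. u$j * s j) * m"
      unfolding v_def inner_vec_def
      by (simp add: right_diff_distrib sum_subtractf sum_distrib_left sum_distrib_right mult_ac)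
    also have "\<dots> = (\<Sum>j\<in>UNIV. u$j * (e j * h$j)) / S - (\<Sum>j\<in>UNIV. u$j * e j) / S * ((\<Sum>k\<in>UNIV. e k * h$k) / S)"
      unfolding 1 2 3 ..
    also have "\<dots> = ((\<Sum>j\<in>UNIV. u$j * (e j * h$j)) * S - (\<Sum>j\<in>UNIV. u$j * e j) * (\<Sum>k\<in>UNIV. e k * h$k)) / (S * S)"
      using Spos by (simp add: field_simps)
    finally show ?thesis by simp
  qed
  have "(norm v)^2 \<le> (norm h)^2"
  proof -
    have "(norm v)^2 = (\<Sum>j\<in>UNIV. (s j)^2 * (h$j - m)^2)"
      unfolding norm_sq_vec v_def by (simp add: power_mult_distrib)
    also have "\<dots> \<le> (\<Sum>j\<in>UNIV. s j * (h$j - m)^2)"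
    proof (intro sum_mono mult_right_mono)
      fix j show "(s j)^2 \<le> s j" using s_nn[of j] s_le[of j] by (simp add: power2_eq_square mult_left_le)
    qed simp
    also have "\<dots> = (\<Sum>j\<in>UNIV. s j * (h$j)^2) - 2 * m * (\<Sum>j\<in>UNIV. s j * h$j) + m^2 * (\<Sum>j\<in>UNIV. s j)"
      by (simp add: power2_diff algebra_simps sum.distrib sum_subtractf sum_distrib_left sum_distrib_right)
    also have "\<dots> = (\<Sum>j\<in>UNIV. s j * (h$j)^2) - m^2"
      unfolding sum_s m_def[symmetric] by (simp add: power2_eq_square)
    also have "\<dots> \<le> (\<Sum>j\<in>UNIV. (h$j)^2)"
    proof -
      have "(\<Sum>j\<in>UNIV. s j * (h$j)^2) \<le> (\<Sum>j\<in>UNIV. (h$j)^2)"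
        by (intro sum_mono) (metis mult_left_le_one_le s_le s_nn zero_le_power2)
      then show ?thesis by (smt (verit) zero_le_power2)
    qed
    also have "\<dots> = (norm h)^2" by (simp add: norm_sq_vec)
    finally show ?thesis .
  qed
  then have nv: "norm v \<le> norm h" by (meson norm_ge_zero power2_le_imp_le)
  have "\<bar>u \<bullet> v\<bar> \<le> norm u * norm v" by (rule Cauchy_Schwarz_ineq2)
  also have "\<dots> \<le> norm u * norm h" by (rule mult_left_mono[OF nv norm_ge_zero])
  finally show ?thesis using eq unfolding S_def by simp
qed

definition softmax_vec :: "real^'d \<Rightarrow> real^'d" where
  "softmax_vec v = (\<chi> j. exp (v$j) / (\<Sum>k\<in>UNIV. exp (v$k)))"

lemma softmax_lip: "norm (softmax_vec y - softmax_vec x) \<le> norm (y - x)"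
proof -
  define u where "u = softmax_vec y - softmax_vec x"
  define h where "h = y - x"
  define E where "E t j = exp (x$j + t * h$j)" for t j
  define \<phi> where "\<phi> t = (\<Sum>j\<in>UNIV. u$j * E t j) / (\<Sum>j\<in>UNIV. E t j)" for t
  define \<phi>' where "\<phi>' t = ((\<Sum>j\<in>UNIV. u$j * (E t j * h$j)) * (\<Sum>j\<in>UNIV. E t j)
           - (\<Sum>j\<in>UNIV. u$j * E t j) * (\<Sum>k\<in>UNIV. E t k * h$k))
          / ((\<Sum>j\<in>UNIV. E t j) * (\<Sum>j\<in>UNIV. E t j))" for t
  have Epos: "0 < E t j" for t j unfolding E_def by simp
  have Spos: "0 < (\<Sum>j\<in>UNIV. E t j)" for t by (rule sum_pos) (auto simp: Epos)
  have dE: "DERIV (\<lambda>t. E t j) t :> E t j * h$j" for t j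
    unfolding E_def by (auto intro!: derivative_eq_intros)
  have der: "DERIV \<phi> t :> \<phi>' t" for t
    unfolding \<phi>_def[abs_def] \<phi>'_def
    by (intro DERIV_divide DERIV_sum DERIV_cmult dE) (use Spos[of t] in auto)
  have bnd: "\<bar>\<phi>' t\<bar> \<le> norm u * norm h" for t
    unfolding \<phi>'_def by (rule sm_deriv_bound) (rule Epos)
  have "\<exists>z. 0 < z \<and> z < 1 \<and> \<phi> 1 - \<phi> 0 = (1 - 0) * \<phi>' z"
    by (rule MVT2) (auto intro: der)
  then obtain z where z: "\<phi> 1 - \<phi> 0 = \<phi>' z" by auto
  have phi_at: "\<phi> t = u \<bullet> softmax_vec w" if "\<And>j. E t j = exp (w$j)" for t w
    unfolding \<phi>_def that softmax_vec_def inner_vec_def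
    by (simp add: sum_divide_distrib)
  have "\<phi> 1 = u \<bullet> softmax_vec y" by (rule phi_at) (simp add: E_def h_def)
  moreover have "\<phi> 0 = u \<bullet> softmax_vec x" by (rule phi_at) (simp add: E_def)
  ultimately have "\<phi> 1 - \<phi> 0 = u \<bullet> u" unfolding u_def by (simp add: inner_diff_right)
  then have "(norm u)^2 \<le> norm u * norm h"
    using z bnd[of z] by (simp add: power2_norm_eq_inner)
  then have "norm u \<le> norm h"
    by (cases "norm u = 0") (auto simp: power2_eq_square)
  then show ?thesis unfolding u_def h_def .
qed

lemma row_softmax_row: "row_softmax M $ i = softmax_vec (M $ i)"
  by (simp add: row_softmax_def softmax_vec_def vec_eq_iff)

lemma row_softmax_lip: "norm (row_softmax M - row_softmax N) \<le> norm (M - N)"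
  by (rule norm_le_componentwise_cart) (simp only: vector_minus_component row_softmax_row softmax_lip)



lemma mat_sub_ldistrib: "(A::real^'m^'n) ** (B - C) = A ** B - A ** (C::real^'k^'m)"
  by (simp add: matrix_matrix_mult_def vec_eq_iff sum_subtractf right_diff_distrib)

lemma mat_sub_rdistrib: "((B::real^'m^'n) - C) ** (A::real^'k^'m) = B ** A - C ** A"
  by (simp add: matrix_matrix_mult_def vec_eq_iff sum_subtractf left_diff_distrib)

theorem theorem1:
  fixes A P :: "real^'n^'n" and X :: "real^'p^'n"
    and W\<^sub>x :: "real^'d^'p" and W\<^sub>z :: "real^'d^'d"
    and \<sigma> :: "real^'d^'n \<Rightarrow> real^'d^'n"
  assumes "is_adjacency A"
    and "(frob_norm W\<^sub>z)^2 < 1 / real CARD('n)"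
    and "\<sigma> = row_softmax \<or> \<sigma> = sigmoid_mat"
  shows "well_posed (\<lambda>Z. \<sigma> (norm_adj A ** Z ** W\<^sub>z + P ** X ** W\<^sub>x))"
proof -
  define f where "f = (\<lambda>Z. \<sigma> (norm_adj A ** Z ** W\<^sub>z + P ** X ** W\<^sub>x))"
  define c where "c = norm (norm_adj A) * norm W\<^sub>z"
  have sig: "norm (\<sigma> M - \<sigma> N) \<le> norm (M - N)" for M N
    using assms(3) sigmoid_mat_lip row_softmax_lip by auto
  have contr: "dist (f Z1) (f Z2) \<le> c * dist Z1 Z2" for Z1 Z2
  proof -
    have "dist (f Z1) (f Z2) \<le> norm (norm_adj A ** Z1 ** W\<^sub>z - norm_adj A ** Z2 ** W\<^sub>z)"
      unfolding f_def dist_norm using sig[of "norm_adj A ** Z1 ** W\<^sub>z + P ** X ** W\<^sub>x" "norm_adj A ** Z2 ** W\<^sub>z + P ** X ** W\<^sub>x"] by simp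
    also have "norm_adj A ** Z1 ** W\<^sub>z - norm_adj A ** Z2 ** W\<^sub>z = norm_adj A ** (Z1 - Z2) ** W\<^sub>z"
      by (simp add: mat_sub_ldistrib mat_sub_rdistrib)
    also have "norm \<dots> \<le> norm (norm_adj A ** (Z1 - Z2)) * norm W\<^sub>z"
      by (rule norm_mult_le)
    also have "\<dots> \<le> norm (norm_adj A) * norm (Z1 - Z2) * norm W\<^sub>z"
      by (intro mult_right_mono norm_mult_le norm_ge_zero)
    finally show ?thesis unfolding c_def dist_norm by (simp add: mult_ac)
  qed
  have c0: "0 \<le> c" unfolding c_def by simp
  have c1: "c < 1"
  proof -
    have n0: "0 < real CARD('n)" by simp
    have w: "real CARD('n) * (norm W\<^sub>z)^2 < 1"
      using assms(2) n0 unfolding frob_eq by (simp add: field_simps)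
    have "c^2 = (norm (norm_adj A))^2 * (norm W\<^sub>z)^2" unfolding c_def by (simp add: power_mult_distrib)
    also have "\<dots> \<le> real CARD('n) * (norm W\<^sub>z)^2"
      by (intro mult_right_mono norm_adj_bound assms(1)) simp
    finally have "c^2 < 1" using w by simp
    then show ?thesis by (metis not_less one_le_power)
  qed
  have ex: "\<exists>!Z. f Z = Z" by (rule banach_fix_type[OF c0 c1]) (use contr in blast)
  then have ex1: "\<exists>!Z. Z = f Z" by metis
  define Zs where "Zs = (THE Z. Z = f Z)"
  have fixp: "Zs = f Zs" unfolding Zs_def by (rule theI'[OF ex1])
  have conv: "(\<lambda>k. (f ^^ k) Z0) \<longlonglongrightarrow> Zs" for Z0
  proof -
    have b: "dist ((f ^^ k) Z0) Zs \<le> c ^ k * dist Z0 Zs" for k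
    proof (induction k)
      case 0 then show ?case by simp
    next
      case (Suc k)
      have "dist ((f ^^ Suc k) Z0) Zs = dist (f ((f ^^ k) Z0)) (f Zs)" by (simp add: fixp[symmetric])
      also have "\<dots> \<le> c * dist ((f ^^ k) Z0) Zs" by (rule contr)
      also have "\<dots> \<le> c * (c ^ k * dist Z0 Zs)" by (rule mult_left_mono[OF Suc c0])
      finally show ?case by (simp add: mult_ac)
    qed
    have "(\<lambda>k. dist ((f ^^ k) Z0) Zs) \<longlonglongrightarrow> 0"
    proof (rule Lim_null_comparison)
      show "\<forall>\<^sub>F k in sequentially. norm (dist ((f ^^ k) Z0) Zs) \<le> c ^ k * dist Z0 Zs"
        using b by simp
      show "(\<lambda>k. c ^ k * dist Z0 Zs) \<longlonglongrightarrow> 0"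
        by (intro tendsto_mult_left_zero LIMSEQ_power_zero) (use c0 c1 in simp)
    qed
    then show ?thesis by (rule tendsto_dist_iff[THEN iffD2])
  qed
  show ?thesis unfolding well_posed_def f_def[symmetric] Zs_def[symmetric]
    using ex1 conv by (intro conjI allI)
qed


end
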